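(* Let $\mathcal{O}:\mathcal{P}\to\mathcal{P}$ be a lowering operator and let $\{f_n\}_{n\ge0}$ be a sequence of polynomials in $\mathcal{P}$ such that $\rho_n f_n=\mathcal{O}(f_{n+1})$ for all $n\ge0$, with $\rho_n\in\mathbb{C}\setminus\{0\}$. Then either $f_n=0$ for all $n\ge0$, or there is $n_0\ge0$ such that $f_{n_0}\neq0$, $f_i=0$ for $0\le i\le n_0-1$ (if $n_0\ge1$), and $\deg(f_{n+1})=\deg(f_n)+1$ for all $n\ge n_0$.
   Context: $\mathcal{P}$ denotes the complex vector space of polynomials in one variable $x$ with complex coefficients. A lowering operator is a linear map $\mathcal{O}:\mathcal{P}\to\mathcal{P}$ such that $\mathcal{O}(1)=0$ and $\deg(\mathcal{O}(x^n))=n-1$ for all $n\ge 1$. *)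

theory Defs
  imports "HOL-Computational_Algebra.Polynomial"
begin

definition lowering_operator :: "(complex poly \<Rightarrow> complex poly) \<Rightarrow> bool" where
  "lowering_operator L \<longleftrightarrow>
     (\<forall>p q. L (p + q) = L p + L q) \<and>
     (\<forall>c p. L (smult c p) = smult c (L p)) \<and>
     L 1 = 0 \<and>
     (\<forall>n\<ge>1. L (monom 1 n) \<noteq> 0 \<and> degree (L (monom 1 n)) = n - 1)"

end

theory Submission
  imports Defs
begin

lemma key:
  assumes "lowering_operator L"
  shows "(degree q = 0 \<longrightarrow> L q = 0) \<and> (degree q \<ge> 1 \<longrightarrow> degree (L q) = degree q - 1)"
proof (induction "degree q" arbitrary: q rule: less_induct)
  case less
  have add: "\<And>p q. L (p + q) = L p + L q" and sm: "\<And>c p. L (smult c p) = smult c (L p)"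
    and one: "L 1 = 0" and mon: "\<And>n. n \<ge> 1 \<Longrightarrow> L (monom 1 n) \<noteq> 0 \<and> degree (L (monom 1 n)) = n - 1"
    using assms unfolding lowering_operator_def by auto
  show ?case
  proof (cases "degree q = 0")
    case True
    then obtain c where "q = [:c:]" using degree_eq_zeroE by blast
    hence "q = smult c 1" by simp
    hence "L q = 0" using sm[of c 1] one by simp
    thus ?thesis using True by simp
  next
    case False
    define d where "d = degree q"
    define c where "c = lead_coeff q"
    define r where "r = q - smult c (monom 1 d)"
    have d1: "d \<ge> 1" using False d_def by simp
    have c0: "c \<noteq> 0" using False c_def by auto
    have qr: "q = smult c (monom 1 d) + r" using r_def by simp
    have rdeg: "degree r < d"
    proof -
      have "r = q - monom c d" using r_def by (simp add: smult_monom)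
      moreover have "degree (q - monom c d) < d"
        unfolding c_def d_def using False
        by (smt (verit, ccfv_threshold) coeff_diff coeff_monom degree_0
    degree_diff_less diff_self leading_coeff_0_iff less_not_refl
    linorder_neqE_nat)
      ultimately show ?thesis by simp
    qed
    have Lq: "L q = smult c (L (monom 1 d)) + L r" using qr add sm by simp
    have dm: "degree (smult c (L (monom 1 d))) = d - 1" using mon[OF d1] c0 by simp
    have "degree (L q) = d - 1"
    proof (cases "degree r = 0")
      case True
      then have "L r = 0" using less rdeg d_def by auto
      thus ?thesis using Lq dm by simp
    next
      case False
      then have "degree (L r) = degree r - 1" using less rdeg d_def by auto
      hence "degree (L r) < d - 1" using rdeg False by linarith
      thus ?thesis using Lq dm by (simp add: degree_add_eq_left)
    qed
    thus ?thesis using d_def False by simp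
  qed
qed

theorem proposition1:
  fixes L :: "complex poly \<Rightarrow> complex poly"
    and f :: "nat \<Rightarrow> complex poly"
    and \<rho> :: "nat \<Rightarrow> complex"
  assumes "lowering_operator L"
    and "\<And>n. \<rho> n \<noteq> 0"
    and "\<And>n. smult (\<rho> n) (f n) = L (f (Suc n))"
  shows "(\<forall>n. f n = 0) \<or>
         (\<exists>n0. f n0 \<noteq> 0 \<and> (\<forall>i<n0. f i = 0) \<and>
               (\<forall>n\<ge>n0. degree (f (Suc n)) = degree (f n) + 1))"
proof -
  have stp: "f (Suc n) \<noteq> 0 \<and> degree (f (Suc n)) = degree (f n) + 1" if nz: "f n \<noteq> 0" for n
  proof -
    have "L (f (Suc n)) \<noteq> 0" using assms(2,3)[of n] nz by (metis smult_eq_0_iff)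
    hence d1: "degree (f (Suc n)) \<ge> 1" using key[OF assms(1), of "f (Suc n)"] by auto
    hence "degree (L (f (Suc n))) = degree (f (Suc n)) - 1" using key[OF assms(1), of "f (Suc n)"] by auto
    moreover have "degree (L (f (Suc n))) = degree (f n)" using assms(2,3)[of n] by (metis degree_smult_eq)
    ultimately show ?thesis using d1 by fastforce
  qed
  show ?thesis
  proof (cases "\<forall>n. f n = 0")
    case True thus ?thesis by simp
  next
    case False
    define n0 where "n0 = (LEAST n. f n \<noteq> 0)"
    have n0: "f n0 \<noteq> 0" using False n0_def by (metis (mono_tags, lifting) LeastI)
    have below: "\<forall>i<n0. f i = 0" using n0_def not_less_Least by blast
    have nzall: "f n \<noteq> 0" if "n \<ge> n0" for n
      using that proof (induction n rule: dec_induct)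
      case base then show ?case using n0 .
    next
      case (step m) then show ?case using stp by blast
    qed
    show ?thesis using n0 below nzall stp by blast
  qed
qed

end
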